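(* There exist absolute constants $K_0,K_1,C>1$ such that the following holds. Let $A\in[0,1]^{m\times n}$ with $\Delta_1\ge K_0$, $x\in\mathbb{R}_{\ge0}^n$ with $Ax\ge\mathbf 1$, and $\alpha=\ln\Delta_1+\ln\ln\Delta_1+K_1$. Let $i\in[m]$ and let $\theta_i\in(0,1]$ satisfy $\sum_{j:A_{i,j}\ge\theta_i}A_{i,j}x_j\ge\frac12$ and $\sum_{j:A_{i,j}\le\theta_i}A_{i,j}x_j\ge\frac12$. If $z$ is the randomized rounding of $\alpha x$, then $\Pr[(Az)_i<1]\le C\,\theta_i/\Delta_1$.
   Context: $\Delta_1=\max_{j\in[n]}\sum_{i=1}^mA_{i,j}$. Randomized rounding of $\alpha x$: $z\in\mathbb{Z}_{\ge0}^n$ is the random vector with independent coordinates $z_j=\lfloor\alpha x_j\rfloor+B_j$, where $B_j\in\{0,1\}$ is Bernoulli with $\Pr[B_j=1]=\alpha x_j-\lfloor\alpha x_j\rfloor$. *)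

theory Defs
  imports "HOL-Probability.Probability"
begin

text \<open>Matrices are A :: nat => nat => real with rows i < m and columns j < n;
  vectors are functions nat => real restricted to indices j < n.\<close>

definition Delta1 :: "nat \<Rightarrow> nat \<Rightarrow> (nat \<Rightarrow> nat \<Rightarrow> real) \<Rightarrow> real" where
  "Delta1 m n A = Max ((\<lambda>j. \<Sum>i<m. A i j) ` {..<n})"

definition rand_round :: "nat \<Rightarrow> (nat \<Rightarrow> real) \<Rightarrow> (nat \<Rightarrow> int) pmf" where
  "rand_round n y = Pi_pmf {..<n} 0
     (\<lambda>j. map_pmf (\<lambda>b. \<lfloor>y j\<rfloor> + (if b then 1 else 0))
                  (bernoulli_pmf (y j - of_int \<lfloor>y j\<rfloor>)))"

end

theory Submission
  imports Defs
begin

lemma single_mgf: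
  fixes y s a :: real
  assumes y: "y \<ge> 0" and sa: "s * a \<ge> 0"
  shows "measure_pmf.expectation
     (map_pmf (\<lambda>b. \<lfloor>y\<rfloor> + (if b then 1 else 0)) (bernoulli_pmf (y - of_int \<lfloor>y\<rfloor>)))
     (\<lambda>v. exp (- s * a * of_int v)) \<le> exp (y * (exp (- s * a) - 1))"
proof -
  define k where "k = real_of_int \<lfloor>y\<rfloor>"
  define q where "q = y - k"
  define u where "u = exp (- s * a)"
  have k0: "k \<ge> 0" using y by (simp add: k_def)
  have q01: "0 \<le> q" "q \<le> 1" unfolding q_def k_def by (auto simp: of_int_floor_le) (smt (verit) floor_correct of_int_1 of_int_add)
  have E: "measure_pmf.expectation
     (map_pmf (\<lambda>b. \<lfloor>y\<rfloor> + (if b then 1 else 0)) (bernoulli_pmf (y - of_int \<lfloor>y\<rfloor>)))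
     (\<lambda>v. exp (- s * a * of_int v)) = exp (- s * a * (k+1)) * q + exp (- s * a * k) * (1 - q)"
    using q01 by (simp add: k_def q_def)
  have "exp (- s * a * (k+1)) = exp (- s * a * k) * u"
    by (simp add: u_def distrib_left flip: exp_add)
  hence E2: "exp (- s * a * (k+1)) * q + exp (- s * a * k) * (1 - q) = exp (- s * a * k) * (1 - q + q * u)"
    by (simp add: algebra_simps)
  have h1: "1 - q + q * u \<le> exp (q * (u - 1))"
    using exp_ge_add_one_self[of "q * (u - 1)"] by (simp add: algebra_simps)
  have "- s * a \<le> u - 1" using exp_ge_add_one_self[of "- s * a"] by (simp add: u_def)
  hence "k * (- s * a) \<le> k * (u - 1)" using k0 by (metis mult_left_mono)
  hence h2: "exp (- s * a * k) \<le> exp (k * (u - 1))" by (simp add: algebra_simps)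
  have "exp (- s * a * k) * (1 - q + q * u) \<le> exp (k * (u - 1)) * exp (q * (u - 1))"
    apply (rule mult_mono[OF h2 h1]) by simp (use q01 u_def in \<open>smt (verit) exp_gt_zero mult_nonneg_nonneg\<close>)
  also have "\<dots> = exp (y * (u - 1))" by (simp add: q_def algebra_simps flip: exp_add)
  finally show ?thesis using E E2 u_def by simp
qed

lemma tail_mgf:
  fixes y a :: "nat \<Rightarrow> real" and s :: real
  assumes y: "\<And>j. j < n \<Longrightarrow> y j \<ge> 0" and a: "\<And>j. j < n \<Longrightarrow> s * a j \<ge> 0" and s: "s \<ge> 0"
  shows "measure_pmf.prob (rand_round n y) {z. (\<Sum>j<n. a j * of_int (z j)) < 1}
     \<le> exp (s + (\<Sum>j<n. y j * (exp (- s * a j) - 1)))"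
proof -
  define q where "q = (\<lambda>j. map_pmf (\<lambda>b. \<lfloor>y j\<rfloor> + (if b then 1 else 0))
                  (bernoulli_pmf (y j - of_int \<lfloor>y j\<rfloor>)))"
  define S where "S = {z::nat\<Rightarrow>int. (\<Sum>j<n. a j * of_int (z j)) < 1}"
  define f where "f = (\<lambda>j (v::int). exp (- s * a j * of_int v))"
  have rr: "rand_round n y = Pi_pmf {..<n} 0 q" by (simp add: rand_round_def q_def)
  have intq: "integrable (measure_pmf (q j)) (f j)" for j
    by (rule integrable_measure_pmf_finite) (simp add: q_def)
  have intP: "integrable (measure_pmf (Pi_pmf {..<n} 0 q)) (\<lambda>h. \<Prod>j\<in>{..<n}. f j (h j))"
    by (rule integrable_prod_Pi_pmf) (auto intro: intq)
  have "measure_pmf.prob (rand_round n y) S = measure_pmf.expectation (rand_round n y) (indicator S)"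
    by (simp add: Bochner_Integration.integral_indicator measure_pmf.emeasure_eq_measure)
  also have "\<dots> \<le> measure_pmf.expectation (Pi_pmf {..<n} 0 q) (\<lambda>h. exp s * (\<Prod>j\<in>{..<n}. f j (h j)))"
    unfolding rr
  proof (rule integral_mono)
    show "integrable (measure_pmf (Pi_pmf {..<n} 0 q)) (indicator S :: _ \<Rightarrow> real)"
      by (rule measure_pmf.integrable_const_bound[where B=1]) auto
    show "integrable (measure_pmf (Pi_pmf {..<n} 0 q)) (\<lambda>h. exp s * (\<Prod>j\<in>{..<n}. f j (h j)))"
      using intP by simp
    fix z :: "nat \<Rightarrow> int"
    have eq: "exp s * (\<Prod>j\<in>{..<n}. f j (z j)) = exp (s * (1 - (\<Sum>j<n. a j * of_int (z j))))"
      by (simp add: f_def exp_sum[symmetric] exp_add[symmetric] algebra_simps sum_distrib_left sum_negf)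
    show "indicator S z \<le> exp s * (\<Prod>j\<in>{..<n}. f j (z j))"
    proof (cases "z \<in> S")
      case True
      hence "s * (1 - (\<Sum>j<n. a j * of_int (z j))) \<ge> 0" using s by (simp add: S_def)
      thus ?thesis using True eq by simp
    next
      case False thus ?thesis by (simp add: f_def prod_nonneg)
    qed
  qed
  also have "\<dots> = exp s * (\<Prod>j\<in>{..<n}. measure_pmf.expectation (q j) (f j))"
    using expectation_prod_Pi_pmf[of "{..<n}" q f 0] intq by (simp add: f_def)
  also have "\<dots> \<le> exp s * (\<Prod>j\<in>{..<n}. exp (y j * (exp (- s * a j) - 1)))"
  proof (intro mult_left_mono prod_mono conjI)
    fix j assume "j \<in> {..<n}"
    thus "measure_pmf.expectation (q j) (f j) \<le> exp (y j * (exp (- s * a j) - 1))"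
      using single_mgf[OF y a] by (simp add: q_def f_def)
    show "0 \<le> measure_pmf.expectation (q j) (f j)"
      by (rule Bochner_Integration.integral_nonneg) (simp add: f_def)
  qed simp
  also have "\<dots> = exp (s + (\<Sum>j<n. y j * (exp (- s * a j) - 1)))"
    by (simp add: exp_sum exp_add)
  finally show ?thesis by (simp add: S_def)
qed

lemma exp_convex_ineq:
  fixes t u :: real
  assumes "0 \<le> t" "t \<le> 1"
  shows "exp (t * u) \<le> t * exp u + (1 - t)"
proof -
  have "(\<lambda>x. exp (1 * x)) ((1 - t) *\<^sub>R 0 + t *\<^sub>R u) \<le> (1 - t) * (\<lambda>x. exp (1 * x)) 0 + t * (\<lambda>x. exp (1 * x)) u"
    by (rule convex_onD[OF convex_on_exp]) (use assms in auto)
  thus ?thesis by simp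
qed

lemma det_bound:
  fixes a x :: "nat \<Rightarrow> real" and \<theta> \<alpha> s :: real
  assumes a: "\<And>j. j < n \<Longrightarrow> 0 \<le> a j \<and> a j \<le> 1" and x: "\<And>j. j < n \<Longrightarrow> 0 \<le> x j"
    and tot: "(\<Sum>j<n. a j * x j) \<ge> 1"
    and P: "(\<Sum>j\<in>{j. j < n \<and> a j \<le> \<theta>}. a j * x j) \<ge> 1/2"
    and th: "0 < \<theta>" "\<theta> \<le> 1" and al: "\<alpha> \<ge> 0" and s: "s \<ge> 0"
  shows "(\<Sum>j<n. (\<alpha> * x j) * (exp (- s * a j) - 1))
      \<le> \<alpha> * (((exp (- s * \<theta>) - 1) / \<theta> + (exp (- s) - 1)) / 2)"
proof -
  define c1 where "c1 = (exp (- s * \<theta>) - 1) / \<theta>"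
  define c2 where "c2 = exp (- s) - 1"
  have c2le: "c2 \<le> 0" using s by (simp add: c2_def)
  have c12: "c1 \<le> c2"
  proof -
    have "exp (\<theta> * (- s)) \<le> \<theta> * exp (- s) + (1 - \<theta>)"
      by (rule exp_convex_ineq) (use th in auto)
    hence "exp (- s * \<theta>) - 1 \<le> \<theta> * c2" by (simp add: c2_def algebra_simps)
    thus ?thesis using th by (simp add: c1_def divide_le_eq mult.commute)
  qed
  have termb: "exp (- s * a j) - 1 \<le> c2 * a j + (if a j \<le> \<theta> then (c1 - c2) * a j else 0)"
    if j: "j < n" for j
  proof (cases "a j \<le> \<theta>")
    case True
    have "exp ((a j / \<theta>) * (- s * \<theta>)) \<le> (a j / \<theta>) * exp (- s * \<theta>) + (1 - a j / \<theta>)"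
      by (rule exp_convex_ineq) (use th a[OF j] True in auto)
    moreover have "(a j / \<theta>) * (- s * \<theta>) = - s * a j" using th by simp
    ultimately have "exp (- s * a j) - 1 \<le> (a j / \<theta>) * (exp (- s * \<theta>) - 1)"
      by (simp add: algebra_simps)
    also have "\<dots> = c1 * a j" by (simp add: c1_def)
    finally show ?thesis using True by (simp add: algebra_simps)
  next
    case False
    have "exp (a j * (- s)) \<le> a j * exp (- s) + (1 - a j)"
      by (rule exp_convex_ineq) (use a[OF j] in auto)
    hence "exp (- s * a j) - 1 \<le> c2 * a j" by (simp add: c2_def algebra_simps)
    thus ?thesis using False by simp
  qed
  have "(\<Sum>j<n. (\<alpha> * x j) * (exp (- s * a j) - 1))
      \<le> (\<Sum>j<n. (\<alpha> * x j) * (c2 * a j + (if a j \<le> \<theta> then (c1 - c2) * a j else 0)))"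
    by (intro sum_mono mult_left_mono termb) (use x al in auto)
  also have "\<dots> = (\<Sum>j<n. \<alpha> * (c2 * (a j * x j) + (c1 - c2) * (if a j \<le> \<theta> then a j * x j else 0)))"
    by (rule sum.cong) (auto simp: algebra_simps)
  also have "\<dots> = \<alpha> * (c2 * (\<Sum>j<n. a j * x j) + (c1 - c2) * (\<Sum>j<n. if a j \<le> \<theta> then a j * x j else 0))"
    by (simp add: sum_distrib_left[symmetric] sum.distrib)
  also have "(\<Sum>j<n. if a j \<le> \<theta> then a j * x j else 0) = (\<Sum>j\<in>{j. j < n \<and> a j \<le> \<theta>}. a j * x j)"
    by (simp add: sum.If_cases lessThan_def Collect_conj_eq Int_commute)
  also have "c2 * (\<Sum>j<n. a j * x j) + (c1 - c2) * (\<Sum>j\<in>{j. j < n \<and> a j \<le> \<theta>}. a j * x j)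
      \<le> c2 * 1 + (c1 - c2) * (1/2)"
    by (intro add_mono mult_left_mono_neg tot P) (use c2le c12 in auto)
  finally have "(\<Sum>j<n. (\<alpha> * x j) * (exp (- s * a j) - 1)) \<le> \<alpha> * (c2 * 1 + (c1 - c2) * (1/2))"
    using al by (simp add: mult_left_mono)
  moreover have "\<alpha> * (c2 * 1 + (c1 - c2) * (1/2)) = \<alpha> * ((c1 + c2) / 2)" by (simp add: field_simps)
  ultimately show ?thesis unfolding c1_def[symmetric] c2_def[symmetric] by linarith
qed


theorem mainTheorem11:
  shows "\<exists>K0 K1 C :: real. K0 > 1 \<and> K1 > 1 \<and> C > 1 \<and>
    (\<forall>(m::nat) (n::nat) (A :: nat \<Rightarrow> nat \<Rightarrow> real) (x :: nat \<Rightarrow> real) (i::nat) (\<theta>::real).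
       (\<forall>i'<m. \<forall>j<n. 0 \<le> A i' j \<and> A i' j \<le> 1) \<longrightarrow>
       Delta1 m n A \<ge> K0 \<longrightarrow>
       (\<forall>j<n. x j \<ge> 0) \<longrightarrow>
       (\<forall>i'<m. (\<Sum>j<n. A i' j * x j) \<ge> 1) \<longrightarrow>
       i < m \<longrightarrow>
       0 < \<theta> \<longrightarrow> \<theta> \<le> 1 \<longrightarrow>
       (\<Sum>j\<in>{j. j < n \<and> A i j \<ge> \<theta>}. A i j * x j) \<ge> 1/2 \<longrightarrow>
       (\<Sum>j\<in>{j. j < n \<and> A i j \<le> \<theta>}. A i j * x j) \<ge> 1/2 \<longrightarrow>
       (let \<alpha> = ln (Delta1 m n A) + ln (ln (Delta1 m n A)) + K1 in
        measure_pmf.prob (rand_round n (\<lambda>j. \<alpha> * x j))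
          {z. (\<Sum>j<n. A i j * of_int (z j)) < 1}
        \<le> C * \<theta> / Delta1 m n A))"
proof (rule exI[of _ "exp 8"], rule exI[of _ "2::real"], rule exI[of _ "2::real"], intro conjI allI impI)
  fix m n :: nat and A :: "nat \<Rightarrow> nat \<Rightarrow> real" and x :: "nat \<Rightarrow> real" and i :: nat and \<theta> :: real
  assume hA: "\<forall>i'<m. \<forall>j<n. 0 \<le> A i' j \<and> A i' j \<le> 1"
    and hD: "exp 8 \<le> Delta1 m n A" and hx: "\<forall>j<n. 0 \<le> x j"
    and hAx: "\<forall>i'<m. 1 \<le> (\<Sum>j<n. A i' j * x j)" and hi: "i < m"
    and th0: "0 < \<theta>" and th1: "\<theta> \<le> 1"
    and hT: "1/2 \<le> (\<Sum>j\<in>{j. j < n \<and> \<theta> \<le> A i j}. A i j * x j)"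
    and hS: "1/2 \<le> (\<Sum>j\<in>{j. j < n \<and> A i j \<le> \<theta>}. A i j * x j)"
  define D where "D = Delta1 m n A"
  define \<alpha> where "\<alpha> = ln D + ln (ln D) + 2"
  define \<mu> where "\<mu> = \<alpha> / 2"
  define L where "L = ln \<mu>"
  define s where "s = L / \<theta>"
  have D8: "exp 8 \<le> D" using hD by (simp add: D_def)
  have Dpos: "D > 0" using D8 by (smt (verit) exp_gt_zero)
  have lnD: "ln D \<ge> 8" using D8 Dpos by (metis ln_exp ln_le_cancel_iff exp_gt_zero)
  have D1: "D > 1" using D8 by (meson less_le_trans one_less_exp_iff zero_less_numeral)
  have lnD0: "ln D \<noteq> 0" using lnD by linarith
  have DL: "0 < D * ln D" using Dpos lnD by (intro mult_pos_pos) linarith+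
  have lnlnD0: "ln (ln D) \<ge> 0" using lnD by (intro ln_ge_zero) simp
  have lnlnD1: "ln (ln D) \<le> ln D - 1" using lnD by (intro ln_le_minus_one) simp
  have al10: "\<alpha> \<ge> 10" unfolding \<alpha>_def using lnD lnlnD0 by linarith
  have al4: "\<alpha> \<le> 4 * ln D" unfolding \<alpha>_def using lnD lnlnD1 by linarith
  have mu5: "\<mu> \<ge> 5" using al10 by (simp add: \<mu>_def)
  have L0: "L \<ge> 0" using mu5 by (simp add: L_def)
  have Lmu: "L \<le> \<mu> - 2"
  proof -
    have "ln (\<mu> / 2) \<le> \<mu> / 2 - 1" using mu5 by (intro ln_le_minus_one) simp
    moreover have "ln (\<mu> / 2) = L - ln 2" using mu5 by (simp add: L_def ln_div)
    ultimately show ?thesis using ln_2_less_1 mu5 by linarith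
  qed
  have s0: "s \<ge> 0" using L0 th0 by (simp add: s_def)
  have sL: "s \<ge> L"
  proof -
    have "L * \<theta> \<le> L" using L0 th1 by (simp add: mult_left_le)
    thus ?thesis using th0 by (simp add: s_def le_divide_eq)
  qed
  have st: "s * \<theta> = L" using th0 by (simp add: s_def)
  have eL: "exp (- L) = 1 / \<mu>" using mu5 by (simp add: L_def exp_minus inverse_eq_divide)
  have Ai: "\<And>j. j < n \<Longrightarrow> 0 \<le> A i j \<and> A i j \<le> 1" using hA hi by blast
  have step1: "measure_pmf.prob (rand_round n (\<lambda>j. \<alpha> * x j)) {z. (\<Sum>j<n. A i j * of_int (z j)) < 1}
     \<le> exp (s + (\<Sum>j<n. (\<alpha> * x j) * (exp (- s * A i j) - 1)))"
    by (rule tail_mgf) (use hx al10 Ai s0 in auto)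
  have step2: "(\<Sum>j<n. (\<alpha> * x j) * (exp (- s * A i j) - 1))
      \<le> \<alpha> * (((exp (- s * \<theta>) - 1) / \<theta> + (exp (- s) - 1)) / 2)"
    by (rule det_bound) (use Ai hx hAx hi hS th0 th1 al10 s0 in auto)
  have es: "exp (- s) \<le> 1 / \<mu>" using sL eL by (metis exp_le_cancel_iff neg_le_iff_le)
  have "\<alpha> * (((exp (- s * \<theta>) - 1) / \<theta> + (exp (- s) - 1)) / 2)
      = \<mu> * ((1 / \<mu> - 1) / \<theta>) + \<mu> * (exp (- s) - 1)"
    using st eL th0 by (simp add: \<mu>_def field_simps)
  also have "\<dots> \<le> \<mu> * ((1 / \<mu> - 1) / \<theta>) + \<mu> * (1 / \<mu> - 1)"
    using es mu5 by (intro add_left_mono mult_left_mono) auto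
  also have "\<dots> = (1 - \<mu>) / \<theta> + (1 - \<mu>)" using mu5 th0 by (simp add: field_simps)
  finally have step2b: "\<alpha> * (((exp (- s * \<theta>) - 1) / \<theta> + (exp (- s) - 1)) / 2) \<le> (1 - \<mu>) / \<theta> + (1 - \<mu>)" .
  have step3: "s + (\<Sum>j<n. (\<alpha> * x j) * (exp (- s * A i j) - 1)) \<le> (L + 1 - \<mu>) / \<theta> + (1 - \<mu>)"
  proof -
    have "(L + 1 - \<mu>) / \<theta> = s + (1 - \<mu>) / \<theta>" unfolding s_def by (simp add: diff_divide_distrib add_divide_distrib)
    thus ?thesis using step2 step2b by linarith
  qed
  define \<beta> where "\<beta> = \<mu> - L - 1"
  have b1: "\<beta> \<ge> 1" using Lmu by (simp add: \<beta>_def)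
  have "(L + 1 - \<mu>) / \<theta> = - \<beta> - \<beta> * (1 / \<theta> - 1)" using th0 by (simp add: \<beta>_def field_simps)
  also have "\<dots> \<le> - \<beta> - (1 / \<theta> - 1)"
  proof -
    have "1 / \<theta> - 1 \<ge> 0" using th0 th1 by simp
    hence "1 * (1 / \<theta> - 1) \<le> \<beta> * (1 / \<theta> - 1)" using b1 by (intro mult_right_mono) auto
    thus ?thesis by simp
  qed
  finally have step4: "s + (\<Sum>j<n. (\<alpha> * x j) * (exp (- s * A i j) - 1)) \<le> (2 + L - 2 * \<mu>) + (1 - 1 / \<theta>)"
    using step3 by (simp add: \<beta>_def)
  have eth: "exp (1 - 1 / \<theta>) \<le> \<theta>"
  proof -
    have "ln (1 / \<theta>) \<le> 1 / \<theta> - 1" using th0 by (intro ln_le_minus_one) simp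
    hence "1 - 1 / \<theta> \<le> ln \<theta>" using th0 by (simp add: ln_div)
    thus ?thesis using th0 by (metis exp_le_cancel_iff exp_ln)
  qed
  have e2: "exp (2 + L - 2 * \<mu>) = \<mu> / (D * ln D)"
  proof -
    have "exp (2 + L - 2 * \<mu>) = exp 2 * exp L * exp (- \<alpha>)"
      by (simp add: \<mu>_def flip: exp_add)
    also have "exp (- \<alpha>) = 1 / (D * ln D * exp 2)"
    proof -
      have "exp \<alpha> = D * ln D * exp 2" using Dpos D1 by (simp add: \<alpha>_def exp_add ln_gt_zero)
      thus ?thesis by (simp add: exp_minus inverse_eq_divide)
    qed
    also have "exp L = \<mu>" using mu5 by (simp add: L_def)
    finally show ?thesis using lnD0 by simp
  qed
  have "measure_pmf.prob (rand_round n (\<lambda>j. \<alpha> * x j)) {z. (\<Sum>j<n. A i j * of_int (z j)) < 1}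
      \<le> exp ((2 + L - 2 * \<mu>) + (1 - 1 / \<theta>))"
    using step1 step4 by (meson exp_le_cancel_iff order_trans)
  also have "\<dots> = (\<mu> / (D * ln D)) * exp (1 - 1 / \<theta>)" by (simp only: exp_add e2)
  also have "\<dots> \<le> (\<mu> / (D * ln D)) * \<theta>"
  proof (rule mult_left_mono[OF eth])
    show "0 \<le> \<mu> / (D * ln D)" using mu5 DL by (intro divide_nonneg_pos) auto
  qed
  also have "\<dots> \<le> 2 * \<theta> / D"
  proof -
    have "\<mu> \<le> 2 * ln D" using al4 by (simp add: \<mu>_def)
    hence "\<mu> / (D * ln D) \<le> (2 * ln D) / (D * ln D)" by (rule divide_right_mono) (use DL in simp)
    also have "\<dots> = 2 / D" proof -
      have "ln D \<noteq> 0" using lnD by linarith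
      thus ?thesis by simp
    qed
    finally have "\<mu> / (D * ln D) \<le> 2 / D" .
    hence "\<mu> / (D * ln D) * \<theta> \<le> 2 / D * \<theta>" using th0 by (intro mult_right_mono) auto
    thus ?thesis by simp
  qed
  finally show "let \<alpha> = ln (Delta1 m n A) + ln (ln (Delta1 m n A)) + 2 in
        measure_pmf.prob (rand_round n (\<lambda>j. \<alpha> * x j))
          {z. (\<Sum>j<n. A i j * of_int (z j)) < 1}
        \<le> 2 * \<theta> / Delta1 m n A"
    by (simp add: Let_def \<alpha>_def D_def)
qed simp_all

end
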